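(* Consider an $L$-layer ADMM-CSNet with initial weights $(W_{10}^l)_{i,j}\sim\mathcal N(0,1)$, $(W_{20}^l)_{i,j}\sim\mathcal N(0,1)$ i.i.d., $l\in[L]$, and suppose $\|W_{20}^l\|\le c_{20}\sqrt m$ for all $l$ with $c_{20}=3$. Then for any $\mathbf W_1,\mathbf W_2$ with $\|\mathbf W_1-\mathbf W_{10}\|\le R_1$, $\|\mathbf W_2-\mathbf W_{20}\|\le R_2$ and any $s\in[m]$, $$\|\mathbf b_s^l\|\le L_\sigma^{L-l}\big(2(c_{20}+R_2/\sqrt m)+1\big)^{L-l},\quad l\in[L],$$ and at initialization ($R_2=0$), $\|\mathbf b^l_{s,0}\|\le L_\sigma^{L-l}(2c_{20}+1)^{L-l}$.
   Context: Fix $\lambda>0$ and $\sigma(x)=\log(1+e^{x-\lambda})-\log(1+e^{-x-\lambda})$ (componentwise), $|\sigma'|\le L_\sigma$. ADMM-CSNet: input $\mathbf y\in\mathbb R^n$, initial $\mathbf z^0,\mathbf u^0\in\mathbb R^m$; $\mathbf x^l=\frac1{\sqrt n}W_1^l\mathbf y+\frac1{\sqrt m}W_2^l(\mathbf z^{l-1}-\mathbf u^{l-1})$, $\mathbf z^l=\sigma(\mathbf x^l+\mathbf u^{l-1})$, $\mathbf u^l=\mathbf u^{l-1}+\mathbf x^l-\mathbf z^l$, output $\mathbf f=\frac1{\sqrt m}\mathbf z^L$, $f_s$ its $s$-th entry. $\mathbf b_s^l=\partial f_s/\partial\mathbf z^l$ (total derivative through the recursion), $\mathbf b^l_{s,0}$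 the same at the initial weights. $\mathbf W_1=(W_1^l)_l$, $\mathbf W_2=(W_2^l)_l$; weight distances are Frobenius norms over all entries. $\|\cdot\|$ is the Euclidean norm for vectors, spectral norm for matrices. *)

theory Defs
  imports "HOL-Analysis.Analysis"
begin

definition sigma :: "real \<Rightarrow> real \<Rightarrow> real" where
  "sigma lam x = ln (1 + exp (x - lam)) - ln (1 + exp (- x - lam))"

definition sigma_vec :: "real \<Rightarrow> real^'m \<Rightarrow> real^'m" where
  "sigma_vec lam v = (\<chi> i. sigma lam (v $ i))"

definition c20 :: real where "c20 = 3"

definition layer ::
  "(nat \<Rightarrow> real^'n^'m) \<Rightarrow> (nat \<Rightarrow> real^'m^'m) \<Rightarrow> real \<Rightarrow> real^'n \<Rightarrow> nat
     \<Rightarrow> (real^'m) \<times> (real^'m) \<Rightarrow> (real^'m) \<times> (real^'m)" where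
  "layer W1 W2 lam y j st =
     (let z = fst st; u = snd st;
          x = (1 / sqrt (real CARD('n))) *\<^sub>R (W1 j *v y)
            + (1 / sqrt (real CARD('m))) *\<^sub>R (W2 j *v (z - u));
          z' = sigma_vec lam (x + u)
      in (z', u + x - z'))"

fun layers ::
  "(nat \<Rightarrow> real^'n^'m) \<Rightarrow> (nat \<Rightarrow> real^'m^'m) \<Rightarrow> real \<Rightarrow> real^'n \<Rightarrow> nat \<Rightarrow> nat
     \<Rightarrow> (real^'m) \<times> (real^'m) \<Rightarrow> (real^'m) \<times> (real^'m)" where
  "layers W1 W2 lam y a 0 st = st"
| "layers W1 W2 lam y a (Suc k) st = layer W1 W2 lam y (a + Suc k) (layers W1 W2 lam y a k st)"

definition state ::
  "(nat \<Rightarrow> real^'n^'m) \<Rightarrow> (nat \<Rightarrow> real^'m^'m) \<Rightarrow> real \<Rightarrow> real^'n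
     \<Rightarrow> real^'m \<Rightarrow> real^'m \<Rightarrow> nat \<Rightarrow> (real^'m) \<times> (real^'m)" where
  "state W1 W2 lam y z0 u0 l = layers W1 W2 lam y 0 l (z0, u0)"

text \<open>The output entry f_s viewed as a function of the node z^l (total derivative through the
  recursion): x^l and u^(l-1) are held at their forward values, u^l = u^(l-1) + x^l - zeta
  (note u^(l-1) + x^l = z^l + u^l), and layers l+1..L are recomputed; f = z^L / sqrt m.\<close>
definition out_of_z ::
  "(nat \<Rightarrow> real^'n^'m) \<Rightarrow> (nat \<Rightarrow> real^'m^'m) \<Rightarrow> real \<Rightarrow> real^'n
     \<Rightarrow> real^'m \<Rightarrow> real^'m \<Rightarrow> nat \<Rightarrow> nat \<Rightarrow> 'm \<Rightarrow> real^'m \<Rightarrow> real" where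
  "out_of_z W1 W2 lam y z0 u0 L l s zeta =
     (let st = state W1 W2 lam y z0 u0 l;
          fin = layers W1 W2 lam y l (L - l) (zeta, fst st + snd st - zeta)
      in fst fin $ s / sqrt (real CARD('m)))"

definition spec_norm :: "real^'a^'b \<Rightarrow> real" where
  "spec_norm A = onorm (\<lambda>v. A *v v)"

definition frob_dist :: "nat \<Rightarrow> (nat \<Rightarrow> real^'a^'b) \<Rightarrow> (nat \<Rightarrow> real^'a^'b) \<Rightarrow> real" where
  "frob_dist L W V = sqrt (\<Sum>l\<in>{1..L}. \<Sum>i\<in>UNIV. \<Sum>j\<in>UNIV. (W l $ i $ j - V l $ i $ j)\<^sup>2)"

end

theory Submission
  imports Defs
begin

definition sg :: "real \<Rightarrow> real \<Rightarrow> real" where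
  "sg lam x = exp (x - lam) / (1 + exp (x - lam)) + exp (- x - lam) / (1 + exp (- x - lam))"

lemma sigma_deriv: "DERIV (sigma lam) x :> sg lam x"
  unfolding sigma_def sg_def
  by (rule derivative_eq_intros refl | simp add: add_pos_pos)+

lemma deriv_sigma: "deriv (sigma lam) x = sg lam x"
  using sigma_deriv DERIV_imp_deriv by blast

lemma sg_pos: "sg lam x > 0"
  unfolding sg_def by (intro add_pos_pos divide_pos_pos) (auto simp: add_pos_pos)

lemma sg_lt1: assumes "lam > 0" shows "sg lam x < 1"
proof -
  define a where "a = exp (x - lam)"
  define b where "b = exp (- x - lam)"
  have a: "a > 0" and b: "b > 0" unfolding a_def b_def by auto
  have "a * b = exp (-2*lam)" unfolding a_def b_def by (simp flip: exp_add)
  also have "\<dots> < 1" using assms by simp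
  finally have ab: "a * b < 1" .
  have "sg lam x = a/(1+a) + b/(1+b)" unfolding sg_def a_def b_def by simp
  also have "\<dots> = (a + b + 2*a*b)/((1+a)*(1+b))" using a b by (simp add: field_simps)
  also have "\<dots> < 1" 
  proof -
    have "0 < a*b" using a b by simp
    moreover have "(1+a)*(1+b) = 1 + a + b + a*b" by (simp add: algebra_simps)
    ultimately have d: "0 < (1+a)*(1+b)" using a b by linarith
    have "a + b + 2*a*b < (1+a)*(1+b)" using ab by (simp add: algebra_simps)
    thus ?thesis using d by simp
  qed
  finally show ?thesis .
qed

lemma sigma_mono_lip:
  assumes "lam > 0" "a \<le> b"
  shows "0 \<le> sigma lam b - sigma lam a \<and> sigma lam b - sigma lam a \<le> b - a"
proof (cases "a = b")
  case False
  then have "a < b" using assms by simp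
  from MVT2[OF this, of "sigma lam" "sg lam"] sigma_deriv obtain z where
    "sigma lam b - sigma lam a = (b - a) * sg lam z" by blast
  moreover have "0 < sg lam z" "sg lam z < 1" using sg_pos sg_lt1 assms by auto
  ultimately show ?thesis using \<open>a < b\<close>
    by (simp add: mult_left_le)
qed simp

lemma sigma_lips:
  assumes "lam > 0"
  shows "\<bar>sigma lam a - sigma lam b\<bar> \<le> \<bar>a - b\<bar>"
    "\<bar>(a - sigma lam a) - (b - sigma lam b)\<bar> \<le> \<bar>a - b\<bar>"
    "\<bar>(2 * sigma lam a - a) - (2 * sigma lam b - b)\<bar> \<le> \<bar>a - b\<bar>"
  using sigma_mono_lip[OF assms, of a b] sigma_mono_lip[OF assms, of b a]
  by (cases "a \<le> b"; simp add: abs_if; linarith)+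

lemma sigma0: "sigma lam 0 = 0" unfolding sigma_def by simp

lemma Lsig_ge1:
  assumes lam: "lam > 0" and L: "\<And>x. \<bar>deriv (sigma lam) x\<bar> \<le> Lsig"
  shows "Lsig \<ge> 1"
proof (rule ccontr)
  assume "\<not> Lsig \<ge> 1"
  hence Ll: "Lsig < 1" by simp
  define x where "x = (lam + ln 2 + 1) / (1 - Lsig)"
  have xpos: "x > 0" unfolding x_def using Ll lam by (auto intro!: divide_pos_pos add_pos_nonneg)
  from MVT2[OF xpos, of "sigma lam" "sg lam"] sigma_deriv obtain z where
    z: "sigma lam x - sigma lam 0 = (x - 0) * sg lam z" by blast
  have "sg lam z \<le> Lsig" using L[of z] by (simp add: deriv_sigma)
  hence up: "sigma lam x \<le> x * Lsig" using z xpos by (simp add: sigma0 mult_left_mono)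
  have "ln (1 + exp (x - lam)) \<ge> x - lam"
  proof -
    have "0 < 1 + exp (x - lam)" by (metis add_pos_pos exp_gt_zero zero_less_one)
    thus ?thesis by (subst ln_ge_iff) auto
  qed
  moreover have "ln (1 + exp (- x - lam)) \<le> ln 2"
  proof -
    have p: "0 < 1 + exp (- x - lam)" by (metis add_pos_pos exp_gt_zero zero_less_one)
    have "exp (- x - lam) \<le> 1" using xpos lam by simp
    thus ?thesis using p by (subst ln_le_cancel_iff) auto
  qed
  ultimately have "sigma lam x \<ge> x - lam - ln 2" unfolding sigma_def by simp
  with up have "x * (1 - Lsig) \<le> lam + ln 2" by (simp add: algebra_simps)
  moreover have "x * (1 - Lsig) = lam + ln 2 + 1" unfolding x_def using Ll by simp
  ultimately show False by simp
qed

lemma norm_vec_sq: "norm (x::real^'n) = sqrt (\<Sum>i\<in>UNIV. (x$i)^2)"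
  by (simp add: norm_vec_def L2_set_def)

lemma frob_bound:
  fixes M :: "real^'a^'b"
  shows "norm (M *v v) \<le> sqrt (\<Sum>i\<in>UNIV. \<Sum>j\<in>UNIV. (M$i$j)^2) * norm v"
proof -
  have "((M *v v)$i)^2 \<le> (\<Sum>j\<in>UNIV. (M$i$j)^2) * (\<Sum>j\<in>UNIV. (v$j)^2)" for i
    unfolding matrix_vector_mult_def using Cauchy_Schwarz_ineq_sum by simp
  hence "(\<Sum>i\<in>UNIV. ((M *v v)$i)^2) \<le> (\<Sum>i\<in>UNIV. (\<Sum>j\<in>UNIV. (M$i$j)^2) * (\<Sum>j\<in>UNIV. (v$j)^2))"
    by (rule sum_mono)
  also have "\<dots> = (\<Sum>i\<in>UNIV. \<Sum>j\<in>UNIV. (M$i$j)^2) * (\<Sum>j\<in>UNIV. (v$j)^2)"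
    by (simp add: sum_distrib_right)
  finally show ?thesis unfolding norm_vec_sq[of "M *v v"] norm_vec_sq[of v]
    by (metis real_sqrt_le_mono real_sqrt_mult)
qed

lemma sv_lip1: "lam > 0 \<Longrightarrow> norm (sigma_vec lam a - sigma_vec lam b) \<le> norm (a - b)"
  by (rule norm_le_componentwise_cart) (simp add: sigma_vec_def sigma_lips)

lemma sv_lip2: "lam > 0 \<Longrightarrow> norm ((b - sigma_vec lam b) - (a - sigma_vec lam a)) \<le> norm (b - a)"
  by (rule norm_le_componentwise_cart) (simp add: sigma_vec_def sigma_lips)

lemma sv_lip3: "lam > 0 \<Longrightarrow> norm ((2 *\<^sub>R sigma_vec lam b - b) - (2 *\<^sub>R sigma_vec lam a - a)) \<le> norm (b - a)"
  by (rule norm_le_componentwise_cart) (simp add: sigma_vec_def sigma_lips)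

lemma sigma_vec_sum: "sigma_vec lam = (\<lambda>v. \<Sum>i\<in>UNIV. sigma lam (v$i) *\<^sub>R axis i 1)"
  by (rule ext) (simp add: sigma_vec_def vec_eq_iff axis_def if_distrib sum.delta cong: if_cong)

lemma sigma_differentiable: "sigma lam differentiable (at x within S)"
  unfolding differentiable_def
  using has_field_derivative_imp_has_derivative[OF sigma_deriv] has_derivative_at_withinI by blast

lemma sigma_vec_differentiable: "sigma_vec lam differentiable (at v)"
  unfolding sigma_vec_sum
  apply (rule differentiable_sum)
   apply simp
  apply (intro ballI differentiable_scaleR differentiable_const)
  apply (rule differentiable_compose[where f="sigma lam"])
   apply (rule sigma_differentiable)
  apply (rule bounded_linear_imp_differentiable)
  apply (rule bounded_linear_vec_nth)
  done

lemma layer_eq: "layer W1 W2 lam y j = (\<lambda>st. let x = (1 / sqrt (real CARD('n))) *\<^sub>R (W1 j *v y)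
            + (1 / sqrt (real CARD('m))) *\<^sub>R (W2 j *v (fst st - snd st)) in
     (sigma_vec lam (x + snd st), snd st + x - sigma_vec lam (x + snd st)))"
  for W1 :: "nat \<Rightarrow> real^'n^'m"
  by (rule ext) (simp add: layer_def Let_def)

lemma layer_differentiable: "layer W1 W2 lam y j differentiable (at st)"
  for W1 :: "nat \<Rightarrow> real^'n::finite^'m::finite"
proof -
  define X where "X = (\<lambda>st. (1 / sqrt (real CARD('n))) *\<^sub>R (W1 j *v y)
            + ((1 / sqrt (real CARD('m))) *\<^sub>R (W2 j *v (fst st - snd st)) + snd st))"
  have X: "X differentiable (at st)" for st
  proof -
    have bl: "bounded_linear (\<lambda>st::((real^'m) \<times> (real^'m)). (1 / sqrt (real CARD('m))) *\<^sub>R (W2 j *v (fst st - snd st)) + snd st)"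
      by (intro bounded_linear_add bounded_linear_compose[OF bounded_linear_scaleR_right]
          bounded_linear_compose[OF matrix_vector_mul_bounded_linear] bounded_linear_sub
          bounded_linear_fst bounded_linear_snd)
    show ?thesis unfolding X_def
      by (rule differentiable_add[OF differentiable_const bounded_linear_imp_differentiable[OF bl]])
  qed
  have e: "layer W1 W2 lam y j = (\<lambda>st. (sigma_vec lam (X st), X st - sigma_vec lam (X st)))"
    unfolding layer_eq X_def by (rule ext) (simp add: Let_def algebra_simps)
  have S: "(\<lambda>st. sigma_vec lam (X st)) differentiable (at st)" for st
    by (rule differentiable_compose[where f="sigma_vec lam", OF sigma_vec_differentiable X])
  show ?thesis unfolding e
    by (rule differentiable_Pair[OF S differentiable_diff[OF X S]])
qed

lemma grad_bound:
  fixes f :: "'a::real_inner \<Rightarrow> real"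
  assumes d: "(f has_derivative (\<lambda>h. b \<bullet> h)) (at x)" and K: "K \<ge> 0"
    and L: "\<And>y. \<bar>f y - f x\<bar> \<le> K * norm (y - x)"
  shows "norm b \<le> K"
proof (rule ccontr)
  assume "\<not> norm b \<le> K"
  hence bK: "norm b > K" by simp
  hence nb: "norm b > 0" using K by linarith
  obtain d where d: "d > 0" and H: "\<And>x'. 0 < norm (x' - x) \<Longrightarrow> norm (x' - x) < d \<Longrightarrow>
      norm (f x' - f x - b \<bullet> (x' - x)) / norm (x' - x) < norm b - K"
    using d[unfolded has_derivative_at'] bK by (meson diff_gt_0_iff_gt)
  define t where "t = d / (2 * norm b)"
  have bz: "b \<noteq> 0" using nb by auto
  have t: "t > 0" unfolding t_def using d nb by simp
  define x' where "x' = x + t *\<^sub>R b"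
  have nx: "norm (x' - x) = d / 2" unfolding x'_def t_def using nb d bz by simp
  have ip: "b \<bullet> (x' - x) = norm b * (d/2)" unfolding x'_def t_def using nb
    by (simp add: power2_norm_eq_inner[symmetric] power2_eq_square)
  have "\<bar>f x' - f x - norm b * (d/2)\<bar> / (d/2) < norm b - K"
    using H[of x'] nx d ip by simp
  hence h1: "\<bar>f x' - f x - norm b * (d/2)\<bar> < (norm b - K) * (d/2)"
    using d by (simp add: divide_less_eq)
  have h2: "\<bar>f x' - f x\<bar> \<le> K * (d/2)" using L[of x'] nx by simp
  from h1 h2 show False by (simp add: algebra_simps abs_if split: if_splits)
qed

lemma step_bound:
  fixes W :: "real^'m::finite^'m"
  assumes WB: "\<And>v. norm (W *v v) \<le> C * sqrt (real CARD('m)) * norm v"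
  shows "norm ((a1 + (c + (1/sqrt(real CARD('m))) *\<^sub>R (W *v v1))) - (a2 + (c + (1/sqrt(real CARD('m))) *\<^sub>R (W *v v2))))
     \<le> norm (a1 - a2) + C * norm (v1 - v2)"
proof -
  have m: "sqrt (real CARD('m)) > 0" by simp
  have e: "(a1 + (c + (1/sqrt(real CARD('m))) *\<^sub>R (W *v v1))) - (a2 + (c + (1/sqrt(real CARD('m))) *\<^sub>R (W *v v2)))
     = (a1 - a2) + (1/sqrt(real CARD('m))) *\<^sub>R (W *v (v1 - v2))"
    by (simp add: matrix_vector_mult_diff_distrib algebra_simps)
  have "norm ((1/sqrt(real CARD('m))) *\<^sub>R (W *v (v1 - v2))) = norm (W *v (v1 - v2)) / sqrt (real CARD('m))"
    by simp
  also have "\<dots> \<le> C * sqrt (real CARD('m)) * norm (v1 - v2) / sqrt (real CARD('m))"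
    using WB[of "v1 - v2"] m by (intro divide_right_mono) auto
  also have "\<dots> = C * norm (v1 - v2)" using m by simp
  finally show ?thesis unfolding e by (meson norm_triangle_le add_left_mono order_trans norm_triangle_ineq)
qed

lemma layer_sum_eq: "fst (layer W1 W2 lam y j st) + snd (layer W1 W2 lam y j st) =
   snd st + ((1 / sqrt (real CARD('n))) *\<^sub>R (W1 j *v y)
            + (1 / sqrt (real CARD('m))) *\<^sub>R (W2 j *v (fst st - snd st)))"
  for W1 :: "nat \<Rightarrow> real^'n::finite^'m::finite"
  by (simp add: layer_def Let_def)

lemma layer_fst_eq: "fst (layer W1 W2 lam y j st) = sigma_vec lam (fst (layer W1 W2 lam y j st) + snd (layer W1 W2 lam y j st))"
  by (simp add: layer_def Let_def algebra_simps)

lemma layers_fst_eq: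
  assumes "k \<ge> 1"
  shows "fst (layers W1 W2 lam y l k st) = sigma_vec lam (fst (layers W1 W2 lam y l k st) + snd (layers W1 W2 lam y l k st))"
proof -
  obtain k' where k: "k = Suc k'" using assms by (cases k) auto
  show ?thesis unfolding k layers.simps by (rule layer_fst_eq)
qed

lemma wk_lip:
  fixes W1 :: "nat \<Rightarrow> real^'n::finite^'m::finite" and W2 :: "nat \<Rightarrow> real^'m^'m"
  assumes lam: "lam > 0" and C: "C \<ge> 0"
   and WB: "\<And>j v. l < j \<Longrightarrow> j \<le> L \<Longrightarrow> norm (W2 j *v v) \<le> C * sqrt (real CARD('m)) * norm v"
  shows "1 \<le> k \<Longrightarrow> l + k \<le> L \<Longrightarrow>
    norm ((fst (layers W1 W2 lam y l k (z1, p - z1)) + snd (layers W1 W2 lam y l k (z1, p - z1)))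
        - (fst (layers W1 W2 lam y l k (z2, p - z2)) + snd (layers W1 W2 lam y l k (z2, p - z2))))
     \<le> (1 + 2 * C) ^ k * norm (z1 - z2)"
proof (induction k)
  case 0 thus ?case by simp
next
  case (Suc k)
  define S1 where "S1 = layers W1 W2 lam y l k (z1, p - z1)"
  define S2 where "S2 = layers W1 W2 lam y l k (z2, p - z2)"
  have WBj: "\<And>v. norm (W2 (l + Suc k) *v v) \<le> C * sqrt (real CARD('m)) * norm v"
    using WB Suc.prems by auto
  have main: "norm ((fst (layers W1 W2 lam y l (Suc k) (z1, p - z1)) + snd (layers W1 W2 lam y l (Suc k) (z1, p - z1)))
        - (fst (layers W1 W2 lam y l (Suc k) (z2, p - z2)) + snd (layers W1 W2 lam y l (Suc k) (z2, p - z2))))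
     \<le> norm (snd S1 - snd S2) + C * norm ((fst S1 - snd S1) - (fst S2 - snd S2))"
    unfolding layers.simps S1_def[symmetric] S2_def[symmetric] layer_sum_eq
    by (rule step_bound[OF WBj])
  show ?case
  proof (cases "k = 0")
    case True
    have a: "snd S1 - snd S2 = - (z1 - z2)" unfolding S1_def S2_def True by simp
    have b: "(fst S1 - snd S1) - (fst S2 - snd S2) = 2 *\<^sub>R (z1 - z2)"
      unfolding S1_def S2_def True by (simp add: scaleR_2 algebra_simps)
    have "norm (snd S1 - snd S2) + C * norm ((fst S1 - snd S1) - (fst S2 - snd S2)) = (1 + 2 * C) * norm (z1 - z2)"
      unfolding a b norm_minus_cancel norm_scaleR by (simp add: algebra_simps)
    then show ?thesis using main True by simp
  next
    case False
    hence k1: "1 \<le> k" by simp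
    define w1 where "w1 = fst S1 + snd S1"
    define w2 where "w2 = fst S2 + snd S2"
    have IH: "norm (w1 - w2) \<le> (1 + 2 * C) ^ k * norm (z1 - z2)"
      unfolding w1_def w2_def S1_def S2_def using Suc.IH k1 Suc.prems by simp
    have f1: "fst S1 = sigma_vec lam w1" unfolding w1_def S1_def by (rule layers_fst_eq[OF k1])
    have f2: "fst S2 = sigma_vec lam w2" unfolding w2_def S2_def by (rule layers_fst_eq[OF k1])
    have s1: "snd S1 = w1 - sigma_vec lam w1" using f1 unfolding w1_def by simp
    have s2: "snd S2 = w2 - sigma_vec lam w2" using f2 unfolding w2_def by simp
    have a: "norm (snd S1 - snd S2) \<le> norm (w1 - w2)" unfolding s1 s2 by (rule sv_lip2[OF lam])
    have "(fst S1 - snd S1) - (fst S2 - snd S2) = (2 *\<^sub>R sigma_vec lam w1 - w1) - (2 *\<^sub>R sigma_vec lam w2 - w2)"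
      unfolding f1 s1 f2 s2 by (simp add: scaleR_2 algebra_simps)
    hence b: "norm ((fst S1 - snd S1) - (fst S2 - snd S2)) \<le> norm (w1 - w2)"
      using sv_lip3[OF lam] by simp
    have "norm (snd S1 - snd S2) + C * norm ((fst S1 - snd S1) - (fst S2 - snd S2)) \<le> (1 + C) * norm (w1 - w2)"
      using a b C mult_left_mono[OF b C] by (simp add: algebra_simps)
    also have "\<dots> \<le> (1 + 2 * C) * norm (w1 - w2)" using C by (simp add: mult_right_mono)
    also have "\<dots> \<le> (1 + 2 * C) * ((1 + 2 * C) ^ k * norm (z1 - z2))" using IH C by (simp add: mult_left_mono)
    finally show ?thesis using main by simp
  qed
qed

lemma out_eq: "out_of_z W1 W2 lam y z0 u0 L l s = (\<lambda>\<zeta>. fst (layers W1 W2 lam y l (L-l)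
   (\<zeta>, (fst (state W1 W2 lam y z0 u0 l) + snd (state W1 W2 lam y z0 u0 l)) - \<zeta>)) $ s / sqrt (real CARD('m)))"
  for W1 :: "nat \<Rightarrow> real^'n::finite^'m::finite"
  by (rule ext) (simp add: out_of_z_def Let_def)

lemma layers_differentiable:
  fixes W1 :: "nat \<Rightarrow> real^'n::finite^'m::finite"
  shows "(\<lambda>\<zeta>. layers W1 W2 lam y l k (\<zeta>, p - \<zeta>)) differentiable (at x)"
proof (induction k arbitrary: x)
  case 0
  show ?case by simp
next
  case (Suc k)
  show ?case unfolding layers.simps
    by (rule differentiable_compose[where f="layer W1 W2 lam y (l + Suc k)", OF layer_differentiable Suc.IH])
qed

lemma out_differentiable:
  fixes W1 :: "nat \<Rightarrow> real^'n::finite^'m::finite"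
  shows "out_of_z W1 W2 lam y z0 u0 L l s differentiable (at x)"
proof -
  define p where "p = fst (state W1 W2 lam y z0 u0 l) + snd (state W1 W2 lam y z0 u0 l)"
  have bl: "bounded_linear (\<lambda>t::((real^'m) \<times> (real^'m)). fst t $ s)"
    by (rule bounded_linear_compose[OF bounded_linear_vec_nth bounded_linear_fst])
  have "(\<lambda>\<zeta>. fst (layers W1 W2 lam y l (L-l) (\<zeta>, p - \<zeta>)) $ s) differentiable (at x)"
    by (rule differentiable_compose[where f="\<lambda>t. fst t $ s", OF bounded_linear_imp_differentiable[OF bl] layers_differentiable])
  hence "(\<lambda>\<zeta>. fst (layers W1 W2 lam y l (L-l) (\<zeta>, p - \<zeta>)) $ s / sqrt (real CARD('m))) differentiable (at x)"
    by (intro differentiable_divide differentiable_const) auto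
  thus ?thesis unfolding out_eq p_def .
qed

lemma out_lip:
  fixes W1 :: "nat \<Rightarrow> real^'n::finite^'m::finite" and W2 :: "nat \<Rightarrow> real^'m^'m"
  assumes lam: "lam > 0" and C: "C \<ge> 0"
   and WB: "\<And>j v. l < j \<Longrightarrow> j \<le> L \<Longrightarrow> norm (W2 j *v v) \<le> C * sqrt (real CARD('m)) * norm v"
   and lL: "l \<le> L"
  shows "\<bar>out_of_z W1 W2 lam y z0 u0 L l s z1 - out_of_z W1 W2 lam y z0 u0 L l s z2\<bar>
     \<le> (1 + 2 * C) ^ (L - l) * norm (z1 - z2)"
proof -
  define p where "p = fst (state W1 W2 lam y z0 u0 l) + snd (state W1 W2 lam y z0 u0 l)"
  define k where "k = L - l"
  define S1 where "S1 = layers W1 W2 lam y l k (z1, p - z1)"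
  define S2 where "S2 = layers W1 W2 lam y l k (z2, p - z2)"
  have m1: "sqrt (real CARD('m)) \<ge> 1" by simp
  have e: "\<bar>out_of_z W1 W2 lam y z0 u0 L l s z1 - out_of_z W1 W2 lam y z0 u0 L l s z2\<bar>
      = \<bar>fst S1 $ s - fst S2 $ s\<bar> / sqrt (real CARD('m))"
    unfolding out_eq S1_def S2_def p_def k_def by (simp add: diff_divide_distrib[symmetric])
  have d: "\<bar>fst S1 $ s - fst S2 $ s\<bar> / sqrt (real CARD('m)) \<le> \<bar>fst S1 $ s - fst S2 $ s\<bar>"
  proof -
    have "\<bar>fst S1 $ s - fst S2 $ s\<bar> * 1 \<le> \<bar>fst S1 $ s - fst S2 $ s\<bar> * sqrt (real CARD('m))"
      by (rule mult_left_mono[OF m1]) simp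
    thus ?thesis using m1 by (simp add: divide_le_eq)
  qed
  have "\<bar>fst S1 $ s - fst S2 $ s\<bar> \<le> (1 + 2 * C) ^ k * norm (z1 - z2)"
  proof (cases "k = 0")
    case True
    have "\<bar>fst S1 $ s - fst S2 $ s\<bar> = \<bar>(z1 - z2) $ s\<bar>" unfolding S1_def S2_def True by simp
    also have "\<dots> \<le> norm (z1 - z2)" by (rule component_le_norm_cart)
    finally show ?thesis using True by simp
  next
    case False
    hence k1: "1 \<le> k" by simp
    define w1 where "w1 = fst S1 + snd S1"
    define w2 where "w2 = fst S2 + snd S2"
    have f1: "fst S1 = sigma_vec lam w1" unfolding w1_def S1_def by (rule layers_fst_eq[OF k1])
    have f2: "fst S2 = sigma_vec lam w2" unfolding w2_def S2_def by (rule layers_fst_eq[OF k1])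
    have "\<bar>fst S1 $ s - fst S2 $ s\<bar> = \<bar>sigma lam (w1 $ s) - sigma lam (w2 $ s)\<bar>"
      unfolding f1 f2 by (simp add: sigma_vec_def)
    also have "\<dots> \<le> \<bar>w1 $ s - w2 $ s\<bar>" by (rule sigma_lips(1)[OF lam])
    also have "\<dots> \<le> norm (w1 - w2)" using component_le_norm_cart[of "w1 - w2" s] by simp
    also have "\<dots> \<le> (1 + 2 * C) ^ k * norm (z1 - z2)"
      unfolding w1_def w2_def S1_def S2_def
      by (rule wk_lip[OF lam C WB k1]) (use k_def lL in auto)
    finally show ?thesis .
  qed
  thus ?thesis using e d unfolding k_def by linarith
qed

lemma gen:
  fixes W1 :: "nat \<Rightarrow> real^'n::finite^'m::finite" and W2 :: "nat \<Rightarrow> real^'m^'m"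
  assumes lam: "lam > 0" and Lsig: "\<And>x. \<bar>deriv (sigma lam) x\<bar> \<le> Lsig" and C: "C \<ge> 0"
   and WB: "\<And>j v. l < j \<Longrightarrow> j \<le> L \<Longrightarrow> norm (W2 j *v v) \<le> C * sqrt (real CARD('m)) * norm v"
   and lL: "l \<le> L"
  shows "out_of_z W1 W2 lam y z0 u0 L l s differentiable (at x0)
     \<and> (\<forall>b. (out_of_z W1 W2 lam y z0 u0 L l s has_derivative (\<lambda>h. b \<bullet> h)) (at x0)
          \<longrightarrow> norm b \<le> Lsig ^ (L - l) * (2 * C + 1) ^ (L - l))"
proof (intro conjI allI impI)
  show "out_of_z W1 W2 lam y z0 u0 L l s differentiable (at x0)" by (rule out_differentiable)
  fix b assume hd: "(out_of_z W1 W2 lam y z0 u0 L l s has_derivative (\<lambda>h. b \<bullet> h)) (at x0)"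
  have "norm b \<le> (1 + 2 * C) ^ (L - l)"
    by (rule grad_bound[OF hd]) (use C out_lip[OF lam C WB lL] in auto)
  also have "\<dots> \<le> (Lsig * (2 * C + 1)) ^ (L - l)"
  proof (rule power_mono)
    have "Lsig \<ge> 1" by (rule Lsig_ge1[OF lam Lsig])
    hence "1 * (2 * C + 1) \<le> Lsig * (2 * C + 1)" using C by (intro mult_right_mono) auto
    thus "1 + 2 * C \<le> Lsig * (2 * C + 1)" by simp
  qed (use C in simp)
  finally show "norm b \<le> Lsig ^ (L - l) * (2 * C + 1) ^ (L - l)" by (simp add: power_mult_distrib)
qed

lemma frob_entry:
  assumes "j \<in> {1..L}"
  shows "sqrt (\<Sum>i\<in>UNIV. \<Sum>k\<in>UNIV. (W j $ i $ k - V j $ i $ k)^2) \<le> frob_dist L W V"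
  unfolding frob_dist_def
  by (rule real_sqrt_le_mono, rule member_le_sum[OF assms]) (auto intro!: sum_nonneg)

lemma spec_bound: "norm (A *v v) \<le> spec_norm A * norm v"
  unfolding spec_norm_def by (rule onorm[OF matrix_vector_mul_bounded_linear])

theorem lemma10:
  fixes lam Lsig R1 R2 :: real and L l :: nat and s :: "'m::finite"
    and y :: "real^'n::finite" and z0 u0 :: "real^'m"
    and W1 W10 :: "nat \<Rightarrow> real^'n^'m" and W2 W20 :: "nat \<Rightarrow> real^'m^'m"
  assumes lam: "lam > 0"
    and Lsig: "\<And>x. \<bar>deriv (sigma lam) x\<bar> \<le> Lsig"
    and W20: "\<And>k. k \<in> {1..L} \<Longrightarrow> spec_norm (W20 k) \<le> c20 * sqrt (real CARD('m))"
    and R1: "frob_dist L W1 W10 \<le> R1"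
    and R2: "frob_dist L W2 W20 \<le> R2"
    and l: "l \<in> {1..L}"
  shows "out_of_z W1 W2 lam y z0 u0 L l s differentiable (at (fst (state W1 W2 lam y z0 u0 l)))
       \<and> (\<forall>b. (out_of_z W1 W2 lam y z0 u0 L l s has_derivative (\<lambda>h. b \<bullet> h))
                 (at (fst (state W1 W2 lam y z0 u0 l)))
             \<longrightarrow> norm b \<le> Lsig ^ (L - l) * (2 * (c20 + R2 / sqrt (real CARD('m))) + 1) ^ (L - l))
       \<and> out_of_z W10 W20 lam y z0 u0 L l s differentiable (at (fst (state W10 W20 lam y z0 u0 l)))
       \<and> (\<forall>b. (out_of_z W10 W20 lam y z0 u0 L l s has_derivative (\<lambda>h. b \<bullet> h))
                 (at (fst (state W10 W20 lam y z0 u0 l)))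
             \<longrightarrow> norm b \<le> Lsig ^ (L - l) * (2 * c20 + 1) ^ (L - l))"
proof -
  have lL: "l \<le> L" using l by simp
  have m: "sqrt (real CARD('m)) > 0" by simp
  have R2pos: "R2 \<ge> 0" using R2 unfolding frob_dist_def by (meson order_trans real_sqrt_ge_zero sum_nonneg zero_le_power2)
  define C where "C = c20 + R2 / sqrt (real CARD('m))"
  have C: "C \<ge> 0" unfolding C_def c20_def using R2pos by simp
  have WB0: "norm (W20 j *v v) \<le> c20 * sqrt (real CARD('m)) * norm v" if "l < j" "j \<le> L" for j v
  proof -
    have "norm (W20 j *v v) \<le> spec_norm (W20 j) * norm v" by (rule spec_bound)
    also have "\<dots> \<le> c20 * sqrt (real CARD('m)) * norm v"
      using W20[of j] that l by (intro mult_right_mono) auto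
    finally show ?thesis .
  qed
  have WB: "norm (W2 j *v v) \<le> C * sqrt (real CARD('m)) * norm v" if "l < j" "j \<le> L" for j v
  proof -
    have "W2 j *v v = W20 j *v v + (W2 j - W20 j) *v v" by (simp add: matrix_vector_mult_diff_rdistrib)
    hence "norm (W2 j *v v) \<le> norm (W20 j *v v) + norm ((W2 j - W20 j) *v v)" by (metis norm_triangle_ineq)
    also have "norm ((W2 j - W20 j) *v v) \<le> sqrt (\<Sum>i\<in>UNIV. \<Sum>k\<in>UNIV. (W2 j $ i $ k - W20 j $ i $ k)^2) * norm v"
      using frob_bound[of "W2 j - W20 j" v] by simp
    also have "\<dots> \<le> R2 * norm v"
      using frob_entry[of j L W2 W20] that l R2 by (intro mult_right_mono) auto
    finally have "norm (W2 j *v v) \<le> c20 * sqrt (real CARD('m)) * norm v + R2 * norm v"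
      using WB0[OF that, of v] by linarith
    also have "\<dots> = C * sqrt (real CARD('m)) * norm v" unfolding C_def using m by (simp add: algebra_simps)
    finally show ?thesis .
  qed
  have A: "out_of_z W1 W2 lam y z0 u0 L l s differentiable (at (fst (state W1 W2 lam y z0 u0 l)))
     \<and> (\<forall>b. (out_of_z W1 W2 lam y z0 u0 L l s has_derivative (\<lambda>h. b \<bullet> h)) (at (fst (state W1 W2 lam y z0 u0 l)))
          \<longrightarrow> norm b \<le> Lsig ^ (L - l) * (2 * C + 1) ^ (L - l))"
    by (rule gen[OF lam Lsig C WB lL])
  have c0: "c20 \<ge> 0" unfolding c20_def by simp
  have B: "out_of_z W10 W20 lam y z0 u0 L l s differentiable (at (fst (state W10 W20 lam y z0 u0 l)))
     \<and> (\<forall>b. (out_of_z W10 W20 lam y z0 u0 L l s has_derivative (\<lambda>h. b \<bullet> h)) (at (fst (state W10 W20 lam y z0 u0 l)))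
          \<longrightarrow> norm b \<le> Lsig ^ (L - l) * (2 * c20 + 1) ^ (L - l))"
    by (rule gen[OF lam Lsig c0 WB0 lL])
  show ?thesis using A B unfolding C_def by blast
qed

end
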